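(* Assume the no-anticipation, common-support and transition-independence conditions stated in the context. Then for every $t\ge T_0+1$, \[ \boldsymbol\mu^{\mathrm{ATT}}_t=\sum_{\mathbf x_1^{T_0}\in\mathcal X^{T_0}}\Big\{\mathbb{E}\big[\mathbf X_t\mid \mathbf X_1^{T_0}=\mathbf x_1^{T_0},D=1\big]-\mathbb{E}\big[\mathbf X_t\mid \mathbf X_1^{T_0}=\mathbf x_1^{T_0},D=0\big]\Big\}\Pr(\mathbf X_1^{T_0}=\mathbf x_1^{T_0}\mid D=1), \] where terms with $\Pr(\mathbf X_1^{T_0}=\mathbf x_1^{T_0}\mid D=1)=0$ are omitted.
   Context: Fix integers $T_0\ge1$, $T_1\ge1$, $T=T_0+T_1$, $K\ge2$, and a set of $K$ outcome categories $\mathcal Y=\{\bar y^{(1)},\dots,\bar y^{(K)}\}$. On a probability space, a unit has a binary treatment indicator $D\in\{0,1\}$ (treated units are untreated in periods $1,\dots,T_0$ and treated in periods $T_0+1,\dots,T$; control units are never treated) and potential outcomes $Y_t(0),Y_t(1)\in\mathcal Y$, $t=1,\dots,T$. For $d\in\{0,1\}$ let $\mathbf X_t(d)=(\mathbf 1(Y_t(d)=\bar y^{(1)}),\dots,\mathbf 1(Y_t(d)=\bar y^{(K)}))^\top\in\mathcal X:=\{x\in\{0,1\}^K:\sum_k x^{(k)}=1\}$. Observed outcomes: $\mathbf X_t=\mathbf X_t(0)$ for $t\le T_0$ and $\mathbf X_t=D\mathbf X_t(1)+(1-D)\mathbf X_t(0)$ for $t\ge T_0+1$. Write $\mathbf X_1^{T_0}=(\mathbf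 X_1,\dots,\mathbf X_{T_0})$, $\mathbf X_1^{T_0}(0)=(\mathbf X_1(0),\dots,\mathbf X_{T_0}(0))$, and $\boldsymbol\mu^{\mathrm{ATT}}_t=\mathbb{E}[\mathbf X_t(1)-\mathbf X_t(0)\mid D=1]$ for $t\ge T_0+1$. Conditional quantities are taken only given events of positive probability. No anticipation: $\mathbf X_t(1)=\mathbf X_t(0)$ for $t\le T_0$. Common support: there is $\epsilon>0$ with $\epsilon\le\Pr(D=1\mid\mathbf X_1^{T_0}=\mathbf x_1^{T_0})<1-\epsilon$ for every $\mathbf x_1^{T_0}$ with $\Pr(\mathbf X_1^{T_0}=\mathbf x_1^{T_0})>0$. Transition independence: for every $t\ge T_0+1$, $\mathbf x_t\in\mathcal X$, $\mathbf x_1^{T_0}\in\mathcal X^{T_0}$: $\Pr(\mathbf X_t(0)=\mathbf x_t\mid \mathbf X_1^{T_0}(0)=\mathbf x_1^{T_0},D=1)=\Pr(\mathbf X_t(0)=\mathbf x_t\mid \mathbf X_1^{T_0}(0)=\mathbf x_1^{T_0},D=0)$. *)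

theory Defs
  imports "HOL-Probability.Probability"
begin

text \<open>Outcome categories are the elements of a finite type 'k with CARD('k) = K.
  A category y is encoded by the one-hot vector onehot y in real^'k.\<close>

definition onehot :: "'k::finite \<Rightarrow> real^'k" where
  "onehot y = (\<chi> k. if y = k then 1 else 0)"

definition Xset :: "(real^'k::finite) set" where
  "Xset = {x. (\<forall>k. x $ k = 0 \<or> x $ k = 1) \<and> (\<Sum>k\<in>UNIV. x $ k) = 1}"

definition cprob :: "'a measure \<Rightarrow> 'a set \<Rightarrow> 'a set \<Rightarrow> real" where
  "cprob M A B = measure M (A \<inter> B) / measure M B"

definition cexp :: "'a measure \<Rightarrow> ('a \<Rightarrow> real^'k::finite) \<Rightarrow> 'a set \<Rightarrow> real^'k" where
  "cexp M X B = (\<chi> k. (\<integral>\<omega>. indicator B \<omega> * (X \<omega> $ k) \<partial>M) / measure M B)"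

text \<open>Potential outcome vectors X_t(d); Y d t is the category of Y_t(d).\<close>
definition Xpot :: "(bool \<Rightarrow> nat \<Rightarrow> 'a \<Rightarrow> 'k::finite) \<Rightarrow> bool \<Rightarrow> nat \<Rightarrow> 'a \<Rightarrow> real^'k" where
  "Xpot Y d t \<omega> = onehot (Y d t \<omega>)"

definition Xobs :: "nat \<Rightarrow> (bool \<Rightarrow> nat \<Rightarrow> 'a \<Rightarrow> 'k::finite) \<Rightarrow> ('a \<Rightarrow> bool) \<Rightarrow> nat \<Rightarrow> 'a \<Rightarrow> real^'k" where
  "Xobs T0 Y D t \<omega> = (if t \<le> T0 then Xpot Y False t \<omega> else Xpot Y (D \<omega>) t \<omega>)"

definition hist :: "'a measure \<Rightarrow> nat \<Rightarrow> (nat \<Rightarrow> 'a \<Rightarrow> real^'k::finite) \<Rightarrow> (nat \<Rightarrow> real^'k) \<Rightarrow> 'a set" where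
  "hist M T0 Z x = {\<omega> \<in> space M. \<forall>s\<in>{1..T0}. Z s \<omega> = x s}"

definition Hists :: "nat \<Rightarrow> (nat \<Rightarrow> real^'k::finite) set" where
  "Hists T0 = PiE {1..T0} (\<lambda>_. Xset)"

definition Dev :: "'a measure \<Rightarrow> ('a \<Rightarrow> bool) \<Rightarrow> bool \<Rightarrow> 'a set" where
  "Dev M D d = {\<omega> \<in> space M. D \<omega> = d}"

end

theory Submission
  imports Defs
begin


lemma onehot_comp: "onehot y $ k = (if y = k then 1 else 0)"
  by (simp add: onehot_def)

lemma onehot_inj: "(onehot a = onehot b) = (a = b)"
proof
  assume "onehot a = onehot b"
  then have "onehot a $ a = onehot b $ a" by simp
  then show "a = b" by (simp add: onehot_comp split: if_splits)
qed simp

lemma onehot_Xset: "onehot y \<in> Xset"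
  by (simp add: Xset_def onehot_comp)

lemma Xset_sub: "Xset \<subseteq> range (onehot :: 'k::finite \<Rightarrow> real^'k)"
proof
  fix x :: "real^'k" assume x: "x \<in> Xset"
  then have x01: "\<forall>k. x $ k = 0 \<or> x $ k = 1" and s: "(\<Sum>k\<in>UNIV. x $ k) = 1"
    by (auto simp: Xset_def)
  have "\<exists>k. x $ k \<noteq> 0"
  proof (rule ccontr)
    assume "\<not> ?thesis"
    then have "\<forall>k. x $ k = 0" by blast
    then have "(\<Sum>k\<in>UNIV. x $ k) = 0" by simp
    with s show False by simp
  qed
  then obtain k where k: "x $ k \<noteq> 0" by blast
  with x01 have k1: "x $ k = 1" by blast
  have "x $ j = 0" if "j \<noteq> k" for j
  proof (rule ccontr)
    assume "x $ j \<noteq> 0"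
    with x01 have j1: "x $ j = 1" by blast
    have nn: "\<forall>i\<in>UNIV. 0 \<le> x $ i" using x01 by (metis order_refl zero_le_one)
    have "(\<Sum>i\<in>{k,j}. x $ i) \<le> (\<Sum>i\<in>UNIV. x $ i)"
      by (rule sum_mono2) (use nn in auto)
    with that k1 j1 s show False by simp
  qed
  with k1 have "x = onehot k" by (auto simp: vec_eq_iff onehot_comp)
  then show "x \<in> range onehot" by blast
qed

lemma finite_Xset: "finite (Xset :: (real^'k::finite) set)"
  by (rule finite_subset[OF Xset_sub]) simp

lemma finite_Hists: "finite (Hists T0 :: (nat \<Rightarrow> real^'k::finite) set)"
  unfolding Hists_def by (intro finite_PiE finite_Xset) simp

theorem corollary1:
  fixes M :: "'a measure"
    and T0 T1 T :: nat
    and Y :: "bool \<Rightarrow> nat \<Rightarrow> 'a \<Rightarrow> 'k::finite"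
    and D :: "'a \<Rightarrow> bool"
  assumes "prob_space M"
    and "T0 \<ge> 1" and "T1 \<ge> 1" and "T = T0 + T1"
    and "CARD('k) \<ge> 2"
    and "D \<in> measurable M (count_space UNIV)"
    and "\<And>d t. Y d t \<in> measurable M (count_space UNIV)"
    \<comment> \<open>no anticipation\<close>
    and no_anticipation: "\<forall>t\<in>{1..T0}. \<forall>\<omega>\<in>space M. Xpot Y True t \<omega> = Xpot Y False t \<omega>"
    \<comment> \<open>common support\<close>
    and common_support: "\<exists>\<epsilon>>0. \<forall>x\<in>Hists T0.
          measure M (hist M T0 (Xobs T0 Y D) x) > 0 \<longrightarrow>
            \<epsilon> \<le> cprob M (Dev M D True) (hist M T0 (Xobs T0 Y D) x)
            \<and> cprob M (Dev M D True) (hist M T0 (Xobs T0 Y D) x) < 1 - \<epsilon>"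
    \<comment> \<open>transition independence\<close>
    and transition_independence: "\<forall>t\<in>{T0+1..T}. \<forall>xt\<in>Xset. \<forall>x\<in>Hists T0.
          measure M (hist M T0 (Xpot Y False) x \<inter> Dev M D True) > 0 \<and>
          measure M (hist M T0 (Xpot Y False) x \<inter> Dev M D False) > 0 \<longrightarrow>
          cprob M {\<omega>\<in>space M. Xpot Y False t \<omega> = xt} (hist M T0 (Xpot Y False) x \<inter> Dev M D True)
          = cprob M {\<omega>\<in>space M. Xpot Y False t \<omega> = xt} (hist M T0 (Xpot Y False) x \<inter> Dev M D False)"
  shows "\<forall>t\<in>{T0+1..T}.
    cexp M (\<lambda>\<omega>. Xpot Y True t \<omega> - Xpot Y False t \<omega>) (Dev M D True)
    = (\<Sum>x\<in>{x\<in>Hists T0. cprob M (hist M T0 (Xobs T0 Y D) x) (Dev M D True) \<noteq> 0}.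
        cprob M (hist M T0 (Xobs T0 Y D) x) (Dev M D True) *\<^sub>R
        (cexp M (Xobs T0 Y D t) (hist M T0 (Xobs T0 Y D) x \<inter> Dev M D True)
         - cexp M (Xobs T0 Y D t) (hist M T0 (Xobs T0 Y D) x \<inter> Dev M D False)))"
  proof -
  interpret P: prob_space M by fact
  let ?h = "\<lambda>x. hist M T0 (Xpot Y False) x"
  define B1 where "B1 = Dev M D True"
  define B0 where "B0 = Dev M D False"
  have hist_eq: "\<And>x. hist M T0 (Xobs T0 Y D) x = ?h x"
    unfolding hist_def Xobs_def by auto
  have measY: "\<And>d t A. {\<omega>\<in>space M. Y d t \<omega> \<in> A} \<in> sets M"
  proof -
    fix d t A
    have "Y d t -` A \<inter> space M \<in> sets M"
      by (rule measurable_sets[OF assms(7)]) simp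
    moreover have "Y d t -` A \<inter> space M = {\<omega>\<in>space M. Y d t \<omega> \<in> A}" by blast
    ultimately show "{\<omega>\<in>space M. Y d t \<omega> \<in> A} \<in> sets M" by simp
  qed
  have measD: "\<And>d. Dev M D d \<in> sets M"
  proof -
    fix d
    have "D -` {d} \<inter> space M \<in> sets M"
      by (rule measurable_sets[OF assms(6)]) simp
    moreover have "D -` {d} \<inter> space M = Dev M D d" by (auto simp: Dev_def)
    ultimately show "Dev M D d \<in> sets M" by simp
  qed
  have B1m: "B1 \<in> sets M" and B0m: "B0 \<in> sets M" using measD by (auto simp: B1_def B0_def)
  have measH: "\<And>x. ?h x \<in> sets M"
  proof -
    fix x :: "nat \<Rightarrow> real^'k"
    have "\<And>s. {\<omega>\<in>space M. Y False s \<omega> \<in> {y. onehot y = x s}} \<in> sets M" by (rule measY)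
    then have "\<And>s. {\<omega>\<in>space M. Xpot Y False s \<omega> = x s} \<in> sets M" by (simp add: Xpot_def)
    then show "?h x \<in> sets M" unfolding hist_def
      by (intro sets.sets_Collect_finite_All) auto
  qed
  have hsub: "\<And>x. ?h x \<subseteq> space M" by (auto simp: hist_def)
  define hm where "hm = (\<lambda>\<omega>. (\<lambda>s. if s \<in> {1..T0} then Xpot Y False s \<omega> else undefined))"
  have hmH: "hm \<omega> \<in> Hists T0" for \<omega>
    by (auto simp: hm_def Hists_def PiE_iff Xpot_def onehot_Xset extensional_def)
  have hmh: "\<omega> \<in> space M \<Longrightarrow> \<omega> \<in> ?h (hm \<omega>)" for \<omega>
    by (auto simp: hm_def hist_def)
  have disj: "x \<in> Hists T0 \<Longrightarrow> y \<in> Hists T0 \<Longrightarrow> x \<noteq> y \<Longrightarrow> ?h x \<inter> ?h y = {}" for x y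
  proof (rule ccontr)
    assume xy: "x \<in> Hists T0" "y \<in> Hists T0" "x \<noteq> y" "?h x \<inter> ?h y \<noteq> {}"
    then obtain \<omega> where "\<omega> \<in> ?h x" "\<omega> \<in> ?h y" by blast
    then have "\<And>s. s \<in> {1..T0} \<Longrightarrow> x s = y s" by (auto simp: hist_def)
    with xy(1,2) have "x = y" unfolding Hists_def by (rule PiE_ext)
    with xy(3) show False by simp
  qed
  have part: "\<And>C. C \<in> sets M \<Longrightarrow> (\<Sum>x\<in>Hists T0. measure M (?h x \<inter> C)) = measure M C"
  proof -
    fix C assume C: "C \<in> sets M"
    have "C = (\<Union>x\<in>Hists T0. ?h x \<inter> C)"
      using hmH hmh sets.sets_into_space[OF C] by blast
    then have "measure M C = measure M (\<Union>x\<in>Hists T0. ?h x \<inter> C)" by simp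
    also have "\<dots> = (\<Sum>x\<in>Hists T0. measure M (?h x \<inter> C))"
    proof (rule P.finite_measure_finite_Union)
      show "(\<lambda>i. ?h i \<inter> C) ` Hists T0 \<subseteq> sets M" using measH C by auto
      show "disjoint_family_on (\<lambda>i. ?h i \<inter> C) (Hists T0)"
        unfolding disjoint_family_on_def using disj by blast
    qed (rule finite_Hists)
    finally show "(\<Sum>x\<in>Hists T0. measure M (?h x \<inter> C)) = measure M C" by simp
  qed
  show ?thesis
  proof (rule ballI)
    fix t assume t: "t \<in> {T0+1..T}"
    show "cexp M (\<lambda>\<omega>. Xpot Y True t \<omega> - Xpot Y False t \<omega>) (Dev M D True)
    = (\<Sum>x\<in>{x\<in>Hists T0. cprob M (hist M T0 (Xobs T0 Y D) x) (Dev M D True) \<noteq> 0}.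
        cprob M (hist M T0 (Xobs T0 Y D) x) (Dev M D True) *\<^sub>R
        (cexp M (Xobs T0 Y D t) (hist M T0 (Xobs T0 Y D) x \<inter> Dev M D True)
         - cexp M (Xobs T0 Y D t) (hist M T0 (Xobs T0 Y D) x \<inter> Dev M D False)))"
    proof (subst vec_eq_iff, rule allI)
      fix k :: 'k
      define E where "E = (\<lambda>d. {\<omega>\<in>space M. Y d t \<omega> = k})"
      have Em: "E d \<in> sets M" for d using measY[of d t "{k}"] by (simp add: E_def)
      have L: "(\<integral>\<omega>. indicator C \<omega> * (Xpot Y d t \<omega> $ k) \<partial>M) = measure M (C \<inter> E d)"
        if C: "C \<in> sets M" for C d
      proof -
        have "(\<integral>\<omega>. indicator C \<omega> * (Xpot Y d t \<omega> $ k) \<partial>M) = (\<integral>\<omega>. indicator (C \<inter> E d) \<omega> \<partial>M)"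
          by (rule Bochner_Integration.integral_cong) (auto simp: indicator_def Xpot_def onehot_comp E_def)
        also have "\<dots> = measure M (C \<inter> E d)"
          using sets.sets_into_space[OF C] by (simp add: Int_absorb2 inf.coboundedI1)
        finally show ?thesis .
      qed
      have LO: "(\<integral>\<omega>. indicator C \<omega> * (Xobs T0 Y D t \<omega> $ k) \<partial>M) = measure M (C \<inter> E d)"
        if C: "C \<in> sets M" and Cd: "C \<subseteq> Dev M D d" for C d
      proof -
        have "(\<integral>\<omega>. indicator C \<omega> * (Xobs T0 Y D t \<omega> $ k) \<partial>M) = (\<integral>\<omega>. indicator C \<omega> * (Xpot Y d t \<omega> $ k) \<partial>M)"
          by (rule Bochner_Integration.integral_cong) (use t Cd in \<open>auto simp: indicator_def Xobs_def Dev_def\<close>)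
        then show ?thesis using L[OF C] by simp
      qed
      have Lint: "integrable M (\<lambda>\<omega>. indicator C \<omega> * (Xpot Y d t \<omega> $ k))"
        if C: "C \<in> sets M" for C d
      proof -
        have "integrable M (indicator (C \<inter> E d) :: 'a \<Rightarrow> real)"
          using C Em by (intro integrable_real_indicator) (auto simp: P.emeasure_finite less_top[symmetric])
        then show ?thesis
          by (rule Bochner_Integration.integrable_cong[THEN iffD1, rotated 2])
             (auto simp: indicator_def Xpot_def onehot_comp E_def)
      qed
      have lhs: "cexp M (\<lambda>\<omega>. Xpot Y True t \<omega> - Xpot Y False t \<omega>) B1 $ k
          = (measure M (B1 \<inter> E True) - measure M (B1 \<inter> E False)) / measure M B1"
      proof -
        have "(\<integral>\<omega>. indicator B1 \<omega> * ((Xpot Y True t \<omega> - Xpot Y False t \<omega>) $ k) \<partial>M)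
            = (\<integral>\<omega>. indicator B1 \<omega> * (Xpot Y True t \<omega> $ k) - indicator B1 \<omega> * (Xpot Y False t \<omega> $ k) \<partial>M)"
          by (simp add: algebra_simps)
        also have "\<dots> = (\<integral>\<omega>. indicator B1 \<omega> * (Xpot Y True t \<omega> $ k) \<partial>M)
              - (\<integral>\<omega>. indicator B1 \<omega> * (Xpot Y False t \<omega> $ k) \<partial>M)"
          by (rule Bochner_Integration.integral_diff) (use Lint B1m in auto)
        also have "\<dots> = measure M (B1 \<inter> E True) - measure M (B1 \<inter> E False)"
          using L B1m by simp
        finally show ?thesis by (simp add: cexp_def)
      qed
      define S where "S = {x\<in>Hists T0. cprob M (?h x) B1 \<noteq> 0}"
      define g where "g = (\<lambda>x. (measure M (?h x \<inter> B1 \<inter> E True) - measure M (?h x \<inter> B1 \<inter> E False)) / measure M B1)"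
      have termeq: "(cprob M (?h x) B1 *\<^sub>R (cexp M (Xobs T0 Y D t) (?h x \<inter> B1)
             - cexp M (Xobs T0 Y D t) (?h x \<inter> B0))) $ k = g x" if xS: "x \<in> S" for x
      proof -
        have xH: "x \<in> Hists T0" and c0: "cprob M (?h x) B1 \<noteq> 0" using xS by (auto simp: S_def)
        define a where "a = measure M (?h x \<inter> B1)"
        define b where "b = measure M (?h x \<inter> B0)"
        have "a \<noteq> 0" "measure M B1 \<noteq> 0" using c0 by (auto simp: cprob_def a_def)
        then have a0: "a > 0" and B0p: "measure M B1 > 0" by (auto simp: a_def less_le)
        have hsplit: "measure M (?h x) = a + b"
        proof -
          have "?h x = (?h x \<inter> B1) \<union> (?h x \<inter> B0)" using hsub by (auto simp: B1_def B0_def Dev_def)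
          then have "measure M (?h x) = measure M ((?h x \<inter> B1) \<union> (?h x \<inter> B0))" by simp
          also have "\<dots> = a + b" unfolding a_def b_def
            by (rule P.finite_measure_Union) (use measH B1m B0m in \<open>auto simp: B1_def B0_def Dev_def\<close>)
          finally show ?thesis .
        qed
        have "b \<ge> 0" by (simp add: b_def)
        with a0 hsplit have hp: "measure M (?h x) > 0" by simp
        obtain \<epsilon> where ep: "\<epsilon> > 0" and cs: "\<forall>x\<in>Hists T0.
          measure M (hist M T0 (Xobs T0 Y D) x) > 0 \<longrightarrow>
            \<epsilon> \<le> cprob M (Dev M D True) (hist M T0 (Xobs T0 Y D) x)
            \<and> cprob M (Dev M D True) (hist M T0 (Xobs T0 Y D) x) < 1 - \<epsilon>"
          using common_support by blast
        from cs xH hp have "cprob M B1 (?h x) < 1 - \<epsilon>" by (simp add: hist_eq B1_def)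
        then have "measure M (B1 \<inter> ?h x) / measure M (?h x) < 1" using ep by (simp add: cprob_def)
        then have "measure M (B1 \<inter> ?h x) < measure M (?h x)" using hp by (simp add: divide_less_eq)
        then have b0: "b > 0" using hsplit by (simp add: a_def Int_commute)
        have Eset: "{\<omega>\<in>space M. Xpot Y False t \<omega> = onehot k} = E False"
          by (auto simp: E_def Xpot_def onehot_inj)
        have "cprob M {\<omega>\<in>space M. Xpot Y False t \<omega> = onehot k} (?h x \<inter> Dev M D True)
          = cprob M {\<omega>\<in>space M. Xpot Y False t \<omega> = onehot k} (?h x \<inter> Dev M D False)"
          using transition_independence[rule_format, OF t onehot_Xset xH] a0 b0
          by (simp add: a_def b_def B1_def B0_def)
        then have ti: "measure M (?h x \<inter> B1 \<inter> E False) / a = measure M (?h x \<inter> B0 \<inter> E False) / b"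
          unfolding Eset cprob_def a_def b_def B1_def B0_def by (simp add: Int_ac)
        have c1: "cexp M (Xobs T0 Y D t) (?h x \<inter> B1) $ k = measure M (?h x \<inter> B1 \<inter> E True) / a"
          unfolding cexp_def a_def using LO[of "?h x \<inter> B1" True] measH B1m by (simp add: B1_def)
        have c0: "cexp M (Xobs T0 Y D t) (?h x \<inter> B0) $ k = measure M (?h x \<inter> B0 \<inter> E False) / b"
          unfolding cexp_def b_def using LO[of "?h x \<inter> B0" False] measH B0m by (simp add: B0_def)
        have "(cprob M (?h x) B1 *\<^sub>R (cexp M (Xobs T0 Y D t) (?h x \<inter> B1)
             - cexp M (Xobs T0 Y D t) (?h x \<inter> B0))) $ k
           = (a / measure M B1) * (measure M (?h x \<inter> B1 \<inter> E True) / a - measure M (?h x \<inter> B1 \<inter> E False) / a)"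
          using c1 c0 ti by (simp add: cprob_def a_def)
        also have "\<dots> = g x" using a0 B0p by (simp add: g_def field_simps)
        finally show ?thesis .
      qed
      have gz: "g x = 0" if "x \<in> Hists T0 - S" for x
      proof -
        from that have "measure M (?h x \<inter> B1) / measure M B1 = 0" by (auto simp: S_def cprob_def)
        then consider "measure M (?h x \<inter> B1) = 0" | "measure M B1 = 0" by auto
        then show ?thesis
        proof cases
          case 1
          have "measure M (?h x \<inter> B1 \<inter> E d) \<le> measure M (?h x \<inter> B1)" for d
            by (rule P.finite_measure_mono) (use measH B1m in auto)
          with 1 have "measure M (?h x \<inter> B1 \<inter> E d) = 0" for d
            by (metis measure_nonneg order_antisym)
          then show ?thesis by (simp add: g_def)
        qed (simp add: g_def)
      qed
      have Ssub: "S \<subseteq> Hists T0" by (auto simp: S_def)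
      have "(\<Sum>x\<in>S. (cprob M (?h x) B1 *\<^sub>R (cexp M (Xobs T0 Y D t) (?h x \<inter> B1)
             - cexp M (Xobs T0 Y D t) (?h x \<inter> B0)))) $ k = (\<Sum>x\<in>S. g x)"
        by (simp add: sum_component termeq del: vector_scaleR_component vector_minus_component)
      also have "\<dots> = (\<Sum>x\<in>Hists T0. g x)"
        by (rule sum.mono_neutral_left[OF finite_Hists Ssub]) (use gz in blast)
      also have "\<dots> = ((\<Sum>x\<in>Hists T0. measure M (?h x \<inter> (B1 \<inter> E True)))
                     - (\<Sum>x\<in>Hists T0. measure M (?h x \<inter> (B1 \<inter> E False)))) / measure M B1"
        by (simp add: g_def Int_assoc flip: sum_divide_distrib sum_subtractf)
      also have "\<dots> = (measure M (B1 \<inter> E True) - measure M (B1 \<inter> E False)) / measure M B1"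
        using part B1m Em by simp
      also have "\<dots> = cexp M (\<lambda>\<omega>. Xpot Y True t \<omega> - Xpot Y False t \<omega>) B1 $ k"
        using lhs by simp
      finally show "cexp M (\<lambda>\<omega>. Xpot Y True t \<omega> - Xpot Y False t \<omega>) (Dev M D True) $ k
        = (\<Sum>x\<in>{x\<in>Hists T0. cprob M (hist M T0 (Xobs T0 Y D) x) (Dev M D True) \<noteq> 0}.
        cprob M (hist M T0 (Xobs T0 Y D) x) (Dev M D True) *\<^sub>R
        (cexp M (Xobs T0 Y D t) (hist M T0 (Xobs T0 Y D) x \<inter> Dev M D True)
         - cexp M (Xobs T0 Y D t) (hist M T0 (Xobs T0 Y D) x \<inter> Dev M D False))) $ k"
        unfolding hist_eq S_def B1_def B0_def by simp
    qed
  qed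
qed

end
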